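(* Let $X$ be a compact $\ell_1$-convex subset of $\mathbb{R}^n$. Then for $0\le j\le k\le n$, \[ \sum_{P\in G_{n,k}} V_j(\pi_PX)=\binom{n-j}{n-k}V_j(X). \]
   Context: A subset $X\subseteq\mathbb{R}^n$ is $\ell_1$-convex if any two points $x,x'\in X$ are joined by a map $\gamma\colon[0,D]\to X$, $D=\sum_i|x_i-x'_i|$, with $\gamma(0)=x,\gamma(D)=x'$, which is distance-preserving for the $\ell_1$ metric $d(x,y)=\sum_i|x_i-y_i|$. $G_{n,k}$ is the set of $k$-dimensional coordinate subspaces of $\mathbb{R}^n$ (spanned by $k$ of the standard basis vectors), and $\pi_P$ is orthogonal projection onto $P$. For a compact $\ell_1$-convex set $Y$ in a coordinate subspace (or in $\mathbb{R}^n$), $V_j(Y)=\sum_{R\in G_{n,j}}\mathrm{Vol}_j(\pi_RY)$, the $j$th $\ell_1$-intrinsic volume, where $\mathrm{Vol}_j$ is Lebesgue measure on $R$; this value does not depend on the ambient coordinate space in which $Y$ is regarded. *)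

theory Defs
  imports "HOL-Analysis.Analysis"
begin

text \<open>Points of R^n are vectors real^'n, n = CARD('n). A coordinate subspace is
  identified with the set S of coordinates spanning it.\<close>

definition l1dist :: "real^'n \<Rightarrow> real^'n \<Rightarrow> real" where
  "l1dist x y = (\<Sum>i\<in>UNIV. \<bar>x $ i - y $ i\<bar>)"

definition l1_convex :: "(real^'n) set \<Rightarrow> bool" where
  "l1_convex X \<longleftrightarrow> (\<forall>x\<in>X. \<forall>x'\<in>X. \<exists>\<gamma> :: real \<Rightarrow> real^'n.
      \<gamma> 0 = x \<and> \<gamma> (l1dist x x') = x' \<and> \<gamma> ` {0..l1dist x x'} \<subseteq> X \<and>
      (\<forall>s\<in>{0..l1dist x x'}. \<forall>t\<in>{0..l1dist x x'}. l1dist (\<gamma> s) (\<gamma> t) = \<bar>s - t\<bar>))"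

definition coord_subspaces :: "nat \<Rightarrow> 'n::finite set set" where
  "coord_subspaces k = {S. card S = k}"

definition coord_proj :: "'n::finite set \<Rightarrow> real^'n \<Rightarrow> real^'n" where
  "coord_proj S x = (\<chi> i. if i \<in> S then x $ i else 0)"

text \<open>Vol_j on the coordinate subspace R (with card R = j): Lebesgue measure on R,
  realized via the coordinate identification R ~ (R \<rightarrow> real) with the product of
  Lebesgue measures.\<close>
definition coord_vol :: "'n::finite set \<Rightarrow> (real^'n) set \<Rightarrow> real" where
  "coord_vol R Y = measure (PiM R (\<lambda>_. lborel)) ((\<lambda>x. restrict (\<lambda>i. x $ i) R) ` Y)"

definition l1_intrinsic_volume :: "nat \<Rightarrow> (real^'n::finite) set \<Rightarrow> real" where
  "l1_intrinsic_volume j Y = (\<Sum>R\<in>coord_subspaces j. coord_vol R (coord_proj R ` Y))"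

end

theory Submission
  imports Defs
begin

lemma proj_comp: "R \<subseteq> P \<Longrightarrow> coord_proj R (coord_proj P x) = coord_proj R x"
  unfolding coord_proj_def by (auto simp: vec_eq_iff)

lemma vol_zero:
  fixes X :: "(real^'n) set"
  assumes "i \<in> R" "i \<notin> P"
  shows "coord_vol R (coord_proj R ` coord_proj P ` X) = 0"
proof -
  let ?M = "PiM R (\<lambda>_. lborel :: real measure)"
  let ?A = "(\<lambda>x. restrict (\<lambda>l. x $ l) R) ` (coord_proj R ` coord_proj P ` X)"
  let ?H = "PiE R (\<lambda>l. if l = i then {0::real} else UNIV)"
  have sub: "?A \<subseteq> ?H"
    using assms by (auto simp: coord_proj_def)
  have fin: "finite R" by simp
  have "emeasure ?M ?H = (\<Prod>l\<in>R. emeasure lborel (if l = i then {0::real} else UNIV))"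
    by (rule product_sigma_finite.emeasure_PiM[OF _ fin]) (auto simp: product_sigma_finite_def lborel.sigma_finite_measure_axioms)
  also have "\<dots> = 0"
    using assms(1) fin by (intro prod_zero) auto
  finally have H0: "emeasure ?M ?H = 0" .
  have Hs: "?H \<in> sets ?M"
    by (rule sets_PiM_I_finite) auto
  have Hn: "?H \<in> null_sets ?M" using H0 Hs by auto
  show ?thesis
  proof (cases "?A \<in> sets ?M")
    case True
    then have "?A \<in> null_sets ?M" using null_sets_subset[OF Hn True sub] by simp
    then show ?thesis unfolding coord_vol_def measure_def by (simp add: null_setsD1)
  next
    case False
    then show ?thesis unfolding coord_vol_def by (simp add: measure_notin_sets)
  qed
qed

lemma count_sup:
  fixes R :: "'n::finite set"
  assumes "card R = j" "j \<le> k" "k \<le> CARD('n)"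
  shows "card {P::'n set. card P = k \<and> R \<subseteq> P} = (CARD('n) - j) choose (CARD('n) - k)"
proof -
  have "bij_betw (\<lambda>P. P - R) {P::'n set. card P = k \<and> R \<subseteq> P} {B. B \<subseteq> - R \<and> card B = k - j}"
  proof (rule bij_betw_byWitness[where f'="\<lambda>B. B \<union> R"])
    show "\<forall>a\<in>{P. card P = k \<and> R \<subseteq> P}. a - R \<union> R = a" by auto
    show "\<forall>a'\<in>{B. B \<subseteq> - R \<and> card B = k - j}. a' \<union> R - R = a'" by auto
    show "(\<lambda>P. P - R) ` {P. card P = k \<and> R \<subseteq> P} \<subseteq> {B. B \<subseteq> - R \<and> card B = k - j}"
      using assms by (auto simp: card_Diff_subset)
    show "(\<lambda>B. B \<union> R) ` {B. B \<subseteq> - R \<and> card B = k - j} \<subseteq> {P. card P = k \<and> R \<subseteq> P}"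
      using assms by (auto simp: card_Un_disjoint disjoint_eq_subset_Compl)
  qed
  then have "card {P::'n set. card P = k \<and> R \<subseteq> P} = card {B. B \<subseteq> - R \<and> card B = k - j}"
    by (rule bij_betw_same_card)
  also have "\<dots> = card (- R) choose (k - j)" by (rule n_subsets) simp
  also have "card (- R) = CARD('n) - j"
    using assms(1) card_Diff_subset[of R UNIV] by (simp add: Compl_eq_Diff_UNIV)
  also have "(CARD('n) - j) choose (k - j) = (CARD('n) - j) choose (CARD('n) - k)"
    using assms by (subst binomial_symmetric) (auto simp: diff_diff_eq)
  finally show ?thesis .
qed

theorem theorem7p2:
  fixes X :: "(real^'n) set" and j k :: nat
  assumes "compact X" and "l1_convex X"
    and "j \<le> k" and "k \<le> CARD('n)"
  shows "(\<Sum>P\<in>coord_subspaces k. l1_intrinsic_volume j (coord_proj P ` X))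
         = real ((CARD('n) - j) choose (CARD('n) - k)) * l1_intrinsic_volume j X"
proof -
  define g where "g R = coord_vol R (coord_proj R ` X)" for R :: "'n set"
  have trm: "coord_vol R (coord_proj R ` coord_proj P ` X) = (if R \<subseteq> P then g R else 0)" for R P
  proof (cases "R \<subseteq> P")
    case True
    then have "coord_proj R ` coord_proj P ` X = coord_proj R ` X"
      by (simp add: image_image proj_comp)
    then show ?thesis using True by (simp add: g_def)
  next
    case False
    then obtain i where "i \<in> R" "i \<notin> P" by auto
    then show ?thesis using False vol_zero by simp
  qed
  have "(\<Sum>P\<in>coord_subspaces k. l1_intrinsic_volume j (coord_proj P ` X))
      = (\<Sum>P\<in>coord_subspaces k. \<Sum>R\<in>coord_subspaces j. (if R \<subseteq> P then g R else 0))"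
    unfolding l1_intrinsic_volume_def by (simp add: trm)
  also have "\<dots> = (\<Sum>R\<in>coord_subspaces j. \<Sum>P\<in>coord_subspaces k. (if R \<subseteq> P then g R else 0))"
    by (rule sum.swap)
  also have "\<dots> = (\<Sum>R\<in>coord_subspaces j. real ((CARD('n) - j) choose (CARD('n) - k)) * g R)"
  proof (rule sum.cong[OF refl])
    fix R :: "'n set" assume "R \<in> coord_subspaces j"
    then have cR: "card R = j" by (simp add: coord_subspaces_def)
    have "(\<Sum>P\<in>coord_subspaces k. (if R \<subseteq> P then g R else 0))
        = (\<Sum>P\<in>{P. card P = k \<and> R \<subseteq> P}. g R)"
    proof -
      have e: "{P::'n set. card P = k \<and> R \<subseteq> P} = {P \<in> {S. card S = k}. R \<subseteq> P}" by auto
      show ?thesis unfolding coord_subspaces_def e by (rule sum.inter_filter[symmetric]) simp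
    qed
    also have "\<dots> = real (card {P::'n set. card P = k \<and> R \<subseteq> P}) * g R" by simp
    finally show "(\<Sum>P\<in>coord_subspaces k. (if R \<subseteq> P then g R else 0))
        = real ((CARD('n) - j) choose (CARD('n) - k)) * g R"
      using count_sup[OF cR assms(3,4)] by simp
  qed
  also have "\<dots> = real ((CARD('n) - j) choose (CARD('n) - k)) * l1_intrinsic_volume j X"
    unfolding l1_intrinsic_volume_def g_def by (simp add: sum_distrib_left)
  finally show ?thesis .
qed

end
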